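(* Let $S$ be a graded reduced affine monoid, $\tilde S$, $\kappa,\delta$, and the orders $\prec$ on $M$ and $\tilde M$ as in the context. Suppose $\{(x^{\lambda},x^{\mu})\mid(\lambda,\mu)\in\Lambda\}$ is a Gröbner system of $\sim_S$ with respect to $\prec$. Then $\Gamma_1\cup\Gamma_2\cup\Gamma_3$ is a Gröbner system of $\sim_{\tilde S}$ with respect to $\prec$ on $\tilde M$, where $\Gamma_1=\{(x^{\lambda},x^{\mu})\mid\lambda,\mu\in\mathbb{N}_0^{\mathcal{A}(\tilde S)},\ (\kappa(\lambda),\kappa(\mu))\in\Lambda,\ \delta(\lambda)=\delta(\mu)\}$, $\Gamma_2=\{(x_{a[i]}x_{b[j]},x_{a[i-1]}x_{b[j+1]})\mid a,b\in\mathcal{A}(S),\ x_a\prec x_b,\ 0<i\le|a|,\ 0\le j<|b|\}$, $\Gamma_3=\{(x_{a[i]}x_{a[j]},x_{a[i-1]}x_{a[j+1]})\mid a\in\mathcal{A}(S),\ 0<i\le j<|a|\}$.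
   Context: A monoid is a commutative cancellative semigroup with identity; affine: finitely generated submonoid of a finitely generated free abelian group; reduced: only unit is the identity. $S$ is graded: $S=\bigsqcup_{d\in\mathbb{N}_0}S_d$, $S_dS_e\subseteq S_{d+e}$, $|s|=d$ for $s\in S_d$. $\mathcal{A}(S)$ is its set of atoms. $M$ is the free commutative monoid on $x_a$ ($a\in\mathcal{A}(S)$), elements $x^{\alpha}$, and $\sim_S$ the congruence $x^{\alpha}\sim_S x^{\gamma}$ iff $\prod a^{\alpha(a)}=\prod a^{\gamma(a)}$ in $S$. $\tilde S=\{s[i]\mid s\in S,0\le i\le|s|\}$ with $s[i]t[j]=(st)[i+j]$; its atoms are $a[i]$, $a\in\mathcal{A}(S)$, $0\le i\le|a|$; $\tilde M$ is the free commutative monoid on $x_{a[i]}$ and $\sim_{\tilde S}$ its defining congruence (defined analogously). $\kappa(\lambda)(a)=\sum_{i=0}^{|a|}\lambda(a[i])$, $\delta(\lambda)=\sum i\,\lambda(a[i])$. An admissible total order on a free commutative monoid is a total order with $x\prec y\Rightarrow xz\prec yz$ and $1\prec x$ for $x\neq1$. A finite $\Lambda\subset M\times M$ is a Gröbner system of a congruence $\sim$ if $x\sim y$ and $y\prec x$ for all $(x,y)\in\Lambda$, and every $z$ not divisible by any first component $x$ of a pair in $\Lambda$ is $\prec$-minimal in its $\sim$-class. Fix an admissible total order $\prec$ on $M$; enumerate $\mathcal{A}(S)=\{a_1,\dots,a_n\}$ with $x_{a_1}\prec\cdots\prec x_{a_n}$, $d_i=|a_i|$. Order $\tilde M$ by: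 $x^{\mu}\prec x^{\lambda}$ iff either $x^{\kappa(\mu)}\prec x^{\kappa(\lambda)}$ in $M$, or $\kappa(\mu)=\kappa(\lambda)$ and the sequence $(\mu(a_1[0]),\dots,\mu(a_1[d_1]),\mu(a_2[0]),\dots,\mu(a_n[d_n]))$ is lexicographically greater than $(\lambda(a_1[0]),\dots,\lambda(a_1[d_1]),\lambda(a_2[0]),\dots,\lambda(a_n[d_n]))$. *)

theory Defs
  imports "HOL-Analysis.Analysis" "HOL-Library.Multiset" "HOL-Library.Product_Plus"
begin

(* Monoids are written additively inside an ambient commutative monoid type.
   An affine monoid lives in Z^n = int^'n (a finitely generated free abelian group). *)

definition affine_monoid :: "(int ^ 'n) set \<Rightarrow> bool" where
  "affine_monoid S \<longleftrightarrow> (\<exists>G. finite G \<and> S = {sum_mset m | m. set_mset m \<subseteq> G})"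

definition monoid_unit :: "'a::comm_monoid_add set \<Rightarrow> 'a \<Rightarrow> bool" where
  "monoid_unit S u \<longleftrightarrow> u \<in> S \<and> (\<exists>v\<in>S. u + v = 0)"

definition reduced_monoid :: "'a::comm_monoid_add set \<Rightarrow> bool" where
  "reduced_monoid S \<longleftrightarrow> (\<forall>u. monoid_unit S u \<longrightarrow> u = 0)"

(* S = disjoint union of S_d = {s. deg s = d}, with S_d + S_e \<subseteq> S_(d+e) *)
definition graded_monoid :: "'a::comm_monoid_add set \<Rightarrow> ('a \<Rightarrow> nat) \<Rightarrow> bool" where
  "graded_monoid S deg \<longleftrightarrow> (\<forall>s\<in>S. \<forall>t\<in>S. deg (s + t) = deg s + deg t)"

definition monoid_atoms :: "'a::comm_monoid_add set \<Rightarrow> 'a set" where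
  "monoid_atoms S = {a\<in>S. \<not> monoid_unit S a \<and>
      (\<forall>b\<in>S. \<forall>c\<in>S. a = b + c \<longrightarrow> monoid_unit S b \<or> monoid_unit S c)}"

(* S-tilde: s[i] is the pair (s,i); (s,i)+(t,j) = (s+t,i+j) *)
definition tilde :: "'a::comm_monoid_add set \<Rightarrow> ('a \<Rightarrow> nat) \<Rightarrow> ('a \<times> nat) set" where
  "tilde S deg = {(s, i). s \<in> S \<and> i \<le> deg s}"

(* free commutative monoid on the x_a, a \<in> C; x^alpha is the multiset alpha *)
definition fmon :: "'a set \<Rightarrow> 'a multiset set" where
  "fmon C = {m. set_mset m \<subseteq> C}"

definition pres_cong :: "'a::comm_monoid_add multiset \<Rightarrow> 'a multiset \<Rightarrow> bool" where
  "pres_cong x y \<longleftrightarrow> sum_mset x = sum_mset y"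

definition admissible_order :: "'a set \<Rightarrow> ('a multiset \<Rightarrow> 'a multiset \<Rightarrow> bool) \<Rightarrow> bool" where
  "admissible_order C lt \<longleftrightarrow>
     (\<forall>x\<in>fmon C. \<not> lt x x) \<and>
     (\<forall>x\<in>fmon C. \<forall>y\<in>fmon C. \<forall>z\<in>fmon C. lt x y \<longrightarrow> lt y z \<longrightarrow> lt x z) \<and>
     (\<forall>x\<in>fmon C. \<forall>y\<in>fmon C. x = y \<or> lt x y \<or> lt y x) \<and>
     (\<forall>x\<in>fmon C. \<forall>y\<in>fmon C. \<forall>z\<in>fmon C. lt x y \<longrightarrow> lt (x + z) (y + z)) \<and>
     (\<forall>x\<in>fmon C. x \<noteq> {#} \<longrightarrow> lt {#} x)"

definition groebner_system ::
  "'a set \<Rightarrow> ('a multiset \<Rightarrow> 'a multiset \<Rightarrow> bool) \<Rightarrow> ('a multiset \<Rightarrow> 'a multiset \<Rightarrow> bool)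
     \<Rightarrow> ('a multiset \<times> 'a multiset) set \<Rightarrow> bool" where
  "groebner_system C eqv lt \<Lambda> \<longleftrightarrow>
     finite \<Lambda> \<and> \<Lambda> \<subseteq> fmon C \<times> fmon C \<and>
     (\<forall>(x, y)\<in>\<Lambda>. eqv x y \<and> lt y x) \<and>
     (\<forall>z\<in>fmon C. (\<forall>(x, y)\<in>\<Lambda>. \<not> x \<subseteq># z) \<longrightarrow>
        (\<forall>w\<in>fmon C. eqv w z \<longrightarrow> \<not> lt w z))"

definition kappa :: "('a \<times> nat) multiset \<Rightarrow> 'a multiset" where
  "kappa l = image_mset fst l"

definition delta :: "('a \<times> nat) multiset \<Rightarrow> nat" where
  "delta l = sum_mset (image_mset snd l)"

(* order of the positions a_1[0],...,a_1[d_1],a_2[0],...: a_k before a_l iff x_{a_k} \<prec> x_{a_l} *)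
definition pos_less :: "('a multiset \<Rightarrow> 'a multiset \<Rightarrow> bool) \<Rightarrow> 'a \<times> nat \<Rightarrow> 'a \<times> nat \<Rightarrow> bool" where
  "pos_less lt q p \<longleftrightarrow> lt {#fst q#} {#fst p#} \<or> (fst q = fst p \<and> snd q < snd p)"

definition lex_greater :: "('a multiset \<Rightarrow> 'a multiset \<Rightarrow> bool) \<Rightarrow> ('a \<times> nat) multiset \<Rightarrow> ('a \<times> nat) multiset \<Rightarrow> bool" where
  "lex_greater lt mu la \<longleftrightarrow>
     (\<exists>p. count la p < count mu p \<and> (\<forall>q. pos_less lt q p \<longrightarrow> count mu q = count la q))"

definition tilde_order :: "('a multiset \<Rightarrow> 'a multiset \<Rightarrow> bool) \<Rightarrow> ('a \<times> nat) multiset \<Rightarrow> ('a \<times> nat) multiset \<Rightarrow> bool" where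
  "tilde_order lt mu la \<longleftrightarrow>
     lt (kappa mu) (kappa la) \<or> (kappa mu = kappa la \<and> lex_greater lt mu la)"

definition Gamma1 :: "'a::comm_monoid_add set \<Rightarrow> ('a \<Rightarrow> nat) \<Rightarrow> ('a multiset \<times> 'a multiset) set
     \<Rightarrow> (('a \<times> nat) multiset \<times> ('a \<times> nat) multiset) set" where
  "Gamma1 S deg \<Lambda> = {(l, m). l \<in> fmon (monoid_atoms (tilde S deg)) \<and> m \<in> fmon (monoid_atoms (tilde S deg))
       \<and> (kappa l, kappa m) \<in> \<Lambda> \<and> delta l = delta m}"

definition Gamma2 :: "'a::comm_monoid_add set \<Rightarrow> ('a \<Rightarrow> nat) \<Rightarrow> ('a multiset \<Rightarrow> 'a multiset \<Rightarrow> bool)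
     \<Rightarrow> (('a \<times> nat) multiset \<times> ('a \<times> nat) multiset) set" where
  "Gamma2 S deg lt = {({#(a, i), (b, j)#}, {#(a, i - 1), (b, j + 1)#}) | a b i j.
       a \<in> monoid_atoms S \<and> b \<in> monoid_atoms S \<and> lt {#a#} {#b#} \<and> 0 < i \<and> i \<le> deg a \<and> j < deg b}"

definition Gamma3 :: "'a::comm_monoid_add set \<Rightarrow> ('a \<Rightarrow> nat)
     \<Rightarrow> (('a \<times> nat) multiset \<times> ('a \<times> nat) multiset) set" where
  "Gamma3 S deg = {({#(a, i), (a, j)#}, {#(a, i - 1), (a, j + 1)#}) | a i j.
       a \<in> monoid_atoms S \<and> 0 < i \<and> i \<le> j \<and> j < deg a}"

end

theory Submission
  imports Defs
begin

lemma sum_le_size_mult: "\<forall>x\<in>#M. x \<le> (d::nat) \<Longrightarrow> sum_mset M \<le> size M * d"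
  by (induction M) auto

lemma sum_ge_size_mult: "\<forall>x\<in>#M. x \<ge> (d::nat) \<Longrightarrow> sum_mset M \<ge> size M * d"
  by (induction M) auto

lemma size_ge2_pair: assumes "size M \<ge> 2" shows "\<exists>i j. {#i, j#} \<subseteq># M"
proof -
  have "M \<noteq> {#}" using assms by auto
  then obtain i where i: "i \<in># M" by (meson multiset_nonemptyE)
  then have "size (M - {#i#}) = size M - 1" by (simp add: size_Diff_singleton)
  then have "M - {#i#} \<noteq> {#}" using assms by auto
  then obtain j where j: "j \<in># M - {#i#}" by (meson multiset_nonemptyE)
  have "{#i, j#} \<subseteq># M" using i j by (simp add: insert_subset_eq_iff)
  then show ?thesis by blast
qed

lemma arith_core:
  fixes Z W :: "nat multiset"
  assumes bW: "\<forall>x\<in>#W. x \<le> d" and bZ: "\<forall>x\<in>#Z. x \<le> d" and sz: "size Z = size W"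
    and lo: "\<forall>i<k. count Z i = count W i" and ck: "count Z k < count W k"
    and g3: "size (filter_mset (\<lambda>x. 0<x \<and> x<d) Z) \<le> 1"
  shows "sum_mset W < sum_mset Z \<and> (\<exists>j\<in>#Z. k < j)"
proof -
  define L where "L = filter_mset (\<lambda>x. x<k) Z"
  have L2: "L = filter_mset (\<lambda>x. x<k) W" unfolding L_def by (rule multiset_eqI) (simp add: lo)
  define Zh where "Zh = filter_mset (\<lambda>x. k<x) Z"
  define Wh where "Wh = filter_mset (\<lambda>x. k<x) W"
  define cZ where "cZ = count Z k"
  define cW where "cW = count W k"
  have dZ: "Z = L + replicate_mset cZ k + Zh"
    unfolding L_def Zh_def cZ_def by (rule multiset_eqI) auto
  have dW: "W = L + replicate_mset cW k + Wh"
    unfolding L2 Wh_def cW_def by (rule multiset_eqI) auto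
  have "0 < count W k" using ck by linarith
  then have "k \<in># W" by simp
  then have kd: "k \<le> d" using bW by auto
  have e1: "cW > cZ" using ck cZ_def cW_def by simp
  have "size L + cZ + size Zh = size L + cW + size Wh"
    using sz dZ dW by (metis size_union size_replicate_mset)
  then have szh: "size Zh = size Wh + (cW - cZ)" using e1 by linarith
  have sZ: "sum_mset Z = sum_mset L + cZ * k + sum_mset Zh" using dZ
    by (metis sum_mset.union sum_mset_replicate_mset of_nat_id)
  have sW: "sum_mset W = sum_mset L + cW * k + sum_mset Wh" using dW
    by (metis sum_mset.union sum_mset_replicate_mset of_nat_id)
  have bWh: "sum_mset Wh \<le> size Wh * d"
    by (rule sum_le_size_mult) (use bW in \<open>auto simp: Wh_def\<close>)
  define Zm where "Zm = filter_mset (\<lambda>x. x<d) Zh"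
  define Zd where "Zd = filter_mset (\<lambda>x. \<not> x<d) Zh"
  have dZh: "Zh = Zm + Zd" unfolding Zm_def Zd_def by (rule multiset_partition)
  have "Zm \<subseteq># filter_mset (\<lambda>x. 0<x \<and> x<d) Z"
    unfolding Zm_def Zh_def by (auto simp: subseteq_mset_def)
  then have szm: "size Zm \<le> 1" using g3 by (meson order_trans size_mset_mono)
  have sZd: "sum_mset Zd \<ge> size Zd * d"
    by (rule sum_ge_size_mult) (auto simp: Zd_def)
  have Zhne: "Zh \<noteq> {#}" using szh e1 by auto
  then obtain j where "j \<in># Zh" by blast
  then have ex: "\<exists>j\<in>#Z. k < j" by (auto simp: Zh_def)
  define e where "e = cW - cZ"
  have e: "cW = cZ + e" "e \<ge> 1" using e1 unfolding e_def by auto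
  have szh': "size Zh = size Wh + e" using szh e by simp
  have sumZh: "sum_mset Zh = sum_mset Zm + sum_mset Zd" using dZh by (metis sum_mset.union)
  have szZh: "size Zh = size Zm + size Zd" using dZh by (metis size_union)
  have "sum_mset W < sum_mset Z"
  proof (cases "Zm = {#}")
    case True
    then have "Zd = Zh" using dZh by simp
    obtain j where j: "j \<in># Zh" using Zhne by blast
    have "j \<in># Zd" using j \<open>Zd = Zh\<close> by simp
    then have "j \<ge> d" by (simp add: Zd_def)
    have "j > k" "j \<in># Z" using j by (simp_all add: Zh_def)
    then have "j \<le> d" using bZ by blast
    have kd': "k < d" using \<open>j \<le> d\<close> \<open>j \<ge> d\<close> \<open>j > k\<close> by linarith
    have 1: "e * k < e * d" using e(2) kd' by (simp add: mult_less_mono2)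
    have 2: "cW * k = cZ * k + e * k" using e(1) by (simp add: add_mult_distrib)
    have 3: "size Zd * d = size Wh * d + e * d" using \<open>Zd = Zh\<close> szh' by (simp add: add_mult_distrib)
    have 4: "sum_mset Zm = 0" using True by simp
    show ?thesis using sZ sW bWh sZd sumZh 4 1 2 3 by linarith
  next
    case False
    then obtain m where m: "m \<in># Zm" by blast
    have "size Zm = 1" using szm False by (cases "size Zm") auto
    then obtain a where "Zm = {#a#}" using size_1_singleton_mset by blast
    then have Zm1: "Zm = {#m#}" using m by simp
    have "m \<in># Zh" using m by (simp add: Zm_def)
    then have mk: "m > k" by (simp add: Zh_def)
    define e' where "e' = e - 1"
    have e': "e = e' + 1" using e(2) unfolding e'_def by simp
    have szd: "size Zd = size Wh + e'" using szZh szh' Zm1 e' by simp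
    have 1: "e' * k \<le> e' * d" using kd by simp
    have 2: "cW * k = cZ * k + e' * k + k" using e(1) e' by (simp add: add_mult_distrib)
    have 3: "size Zd * d = size Wh * d + e' * d" using szd by (simp add: add_mult_distrib)
    have 4: "sum_mset Zm = m" using Zm1 by simp
    show ?thesis using sZ sW bWh sZd sumZh 1 2 3 4 mk by linarith
  qed
  then show ?thesis using ex by blast
qed


lemma affine_zero: "affine_monoid S \<Longrightarrow> 0 \<in> S"
  unfolding affine_monoid_def by (auto intro!: exI[of _ "{#}"])

lemma affine_add: assumes "affine_monoid S" "x \<in> S" "y \<in> S" shows "x + y \<in> S"
proof -
  from assms(1) obtain G where G: "S = {sum_mset m | m. set_mset m \<subseteq> G}" unfolding affine_monoid_def by blast
  from assms(2) G obtain m1 where "x = sum_mset m1" "set_mset m1 \<subseteq> G" by blast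
  moreover from assms(3) G obtain m2 where "y = sum_mset m2" "set_mset m2 \<subseteq> G" by blast
  ultimately have "x + y = sum_mset (m1 + m2)" "set_mset (m1 + m2) \<subseteq> G" by auto
  then show ?thesis using G by blast
qed

lemma unit_S: assumes "0 \<in> S" "reduced_monoid S" shows "monoid_unit S u \<longleftrightarrow> u = 0"
  using assms unfolding reduced_monoid_def monoid_unit_def by (metis add_0)

lemma atoms_sub: "monoid_atoms S \<subseteq> S" unfolding monoid_atoms_def by auto

lemma deg0: assumes "graded_monoid S deg" "0 \<in> S" shows "deg 0 = 0"
  using assms unfolding graded_monoid_def by (metis add_0 add_left_cancel add.right_neutral)

lemma deg_sum: assumes "affine_monoid S" "graded_monoid S deg"
  shows "set_mset m \<subseteq> S \<Longrightarrow> sum_mset m \<in> S \<and> deg (sum_mset m) = sum_mset (image_mset deg m)"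
proof (induction m)
  case empty then show ?case using assms deg0 affine_zero by auto
next
  case (add x m)
  then have "x \<in> S" "sum_mset m \<in> S" "deg (sum_mset m) = sum_mset (image_mset deg m)" by auto
  then show ?case using assms affine_add[OF assms(1)] unfolding graded_monoid_def by auto
qed

lemma atoms_finite: assumes "affine_monoid S" "reduced_monoid S" shows "finite (monoid_atoms S)"
proof -
  from assms(1) obtain G where G: "finite G" "S = {sum_mset m | m. set_mset m \<subseteq> G}" unfolding affine_monoid_def by blast
  have z: "0 \<in> S" using affine_zero assms by blast
  have GS: "G \<subseteq> S" using G(2) by (auto intro!: exI[of _ "{#_#}"])
  have "\<And>m. set_mset m \<subseteq> G \<Longrightarrow> a \<in> monoid_atoms S \<Longrightarrow> sum_mset m = a \<Longrightarrow> a \<in> G" for a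
  proof -
    fix m show "set_mset m \<subseteq> G \<Longrightarrow> a \<in> monoid_atoms S \<Longrightarrow> sum_mset m = a \<Longrightarrow> a \<in> G"
    proof (induction m)
      case empty then show ?case using unit_S[OF z assms(2)] unfolding monoid_atoms_def by auto
    next
      case (add g m)
      have gS: "g \<in> S" using add GS by auto
      have mS: "sum_mset m \<in> S" using add(2) G(2) by auto
      have "a = g + sum_mset m" using add by simp
      then have "g = 0 \<or> sum_mset m = 0" using add(3) gS mS unit_S[OF z assms(2)] unfolding monoid_atoms_def by blast
      then show ?case using add by auto
    qed
  qed
  then have "monoid_atoms S \<subseteq> G" using G(2) atoms_sub by blast
  then show ?thesis using G(1) finite_subset by blast
qed

lemma tilde_unit: fixes S :: "(int ^ 'n) set" assumes "affine_monoid S" "reduced_monoid S" "graded_monoid S deg"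
  shows "monoid_unit (tilde S deg) q \<longleftrightarrow> q = 0"
proof
  have z: "0 \<in> S" using affine_zero assms by blast
  assume "monoid_unit (tilde S deg) q"
  then obtain v where q: "q \<in> tilde S deg" "v \<in> tilde S deg" "q + v = 0" unfolding monoid_unit_def by blast
  then have "fst q + fst v = 0" "snd q + snd v = 0" by (metis fst_add fst_zero, metis snd_add snd_zero)
  moreover have "fst q \<in> S" "fst v \<in> S" using q unfolding tilde_def by auto
  ultimately have "monoid_unit S (fst q)" "snd q = 0" unfolding monoid_unit_def by auto
  then show "q = 0" using unit_S[OF z assms(2)] by (simp add: prod_eq_iff)
next
  have z: "0 \<in> S" using affine_zero assms by blast
  assume "q = 0"
  moreover have "(0::(int ^ 'n) \<times> nat) \<in> tilde S deg" using z unfolding tilde_def zero_prod_def by auto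
  ultimately show "monoid_unit (tilde S deg) q" unfolding monoid_unit_def by (metis add_0)
qed

lemma tilde_atoms: fixes S :: "(int ^ 'n) set" assumes A: "affine_monoid S" "reduced_monoid S" "graded_monoid S deg"
  shows "(x, i) \<in> monoid_atoms (tilde S deg) \<longleftrightarrow> x \<in> monoid_atoms S \<and> i \<le> deg x"
proof -
  have z: "0 \<in> S" using affine_zero assms by blast
  have d0: "deg 0 = 0" using deg0 z A(3) by blast
  have uS: "\<And>u. monoid_unit S u \<longleftrightarrow> u = 0" using unit_S[OF z A(2)] .
  have uT: "\<And>q. monoid_unit (tilde S deg) q \<longleftrightarrow> q = 0" using tilde_unit[OF A] .
  show ?thesis
  proof
    assume at: "(x, i) \<in> monoid_atoms (tilde S deg)"
    then have xS: "x \<in> S" and ix: "i \<le> deg x" unfolding monoid_atoms_def tilde_def by auto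
    have nz: "(x, i) \<noteq> 0" using at uT unfolding monoid_atoms_def by blast
    have x0: "x \<noteq> 0" using nz ix d0 by (auto simp: zero_prod_def)
    have "monoid_unit S b \<or> monoid_unit S c" if bc: "b \<in> S" "c \<in> S" "x = b + c" for b c
    proof -
      define j where "j = min i (deg b)"
      define k where "k = i - j"
      have dx: "deg x = deg b + deg c" using A(3) bc unfolding graded_monoid_def by auto
      have "(b, j) \<in> tilde S deg" "(c, k) \<in> tilde S deg" using bc ix dx unfolding tilde_def j_def k_def by auto
      moreover have "(x, i) = (b, j) + (c, k)" using bc unfolding j_def k_def by auto
      ultimately have "(b, j) = 0 \<or> (c, k) = 0" using at uT unfolding monoid_atoms_def by blast
      then show ?thesis using uS by (auto simp: zero_prod_def)
    qed
    then show "x \<in> monoid_atoms S \<and> i \<le> deg x" using xS ix x0 uS unfolding monoid_atoms_def by blast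
  next
    assume xa: "x \<in> monoid_atoms S \<and> i \<le> deg x"
    then have xS: "x \<in> S" and x0: "x \<noteq> 0" and ix: "i \<le> deg x" using uS unfolding monoid_atoms_def by auto
    have "monoid_unit (tilde S deg) b \<or> monoid_unit (tilde S deg) c"
      if bc: "b \<in> tilde S deg" "c \<in> tilde S deg" "(x, i) = b + c" for b c
    proof -
      have "fst b \<in> S" "fst c \<in> S" "snd b \<le> deg (fst b)" "snd c \<le> deg (fst c)" using bc unfolding tilde_def by auto
      moreover have "x = fst b + fst c" using bc(3) by (metis fst_add fst_conv)
      ultimately have "fst b = 0 \<or> fst c = 0" using xa uS unfolding monoid_atoms_def by blast
      then have "b = 0 \<or> c = 0" using \<open>snd b \<le> deg (fst b)\<close> \<open>snd c \<le> deg (fst c)\<close> d0 by (auto simp: prod_eq_iff)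
      then show ?thesis using uT by blast
    qed
    moreover have "(x, i) \<in> tilde S deg" using xS ix unfolding tilde_def by auto
    moreover have "\<not> monoid_unit (tilde S deg) (x, i)" using uT x0 by (simp add: zero_prod_def)
    ultimately show "(x, i) \<in> monoid_atoms (tilde S deg)" unfolding monoid_atoms_def by blast
  qed
qed



lemma count_pair_image: "count (image_mset (Pair a) M) (a, i) = count M i"
  by (induction M) auto

lemma fst_sum_mset: "fst (sum_mset m) = sum_mset (kappa m)"
  unfolding kappa_def by (induction m) auto

lemma snd_sum_mset: "snd (sum_mset m) = delta m"
  unfolding delta_def by (induction m) auto

lemma kappa_add[simp]: "kappa (a + b) = kappa a + kappa b" unfolding kappa_def by simp
lemma delta_add[simp]: "delta (a + b) = delta a + delta b" unfolding delta_def by simp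

lemma lift_sub: "N \<subseteq># image_mset f M \<Longrightarrow> \<exists>L. L \<subseteq># M \<and> image_mset f L = N"
proof (induction N arbitrary: M)
  case empty then show ?case by (intro exI[of _ "{#}"]) auto
next
  case (add x N)
  then have "x \<in># image_mset f M" by (meson mset_subset_eq_insertD)
  then obtain y where y: "y \<in># M" "f y = x" by auto
  have "image_mset f (M - {#y#}) = image_mset f M - {#x#}" using y by (simp add: image_mset_Diff)
  moreover have "N \<subseteq># image_mset f M - {#x#}" using add(2) by (simp add: insert_subset_eq_iff)
  ultimately obtain L where L: "L \<subseteq># M - {#y#}" "image_mset f L = N" using add(1) by metis
  then have "add_mset y L \<subseteq># M" using y by (simp add: insert_subset_eq_iff)
  then show ?case using L y by (intro exI[of _ "add_mset y L"]) auto
qed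

lemma lift_delta: "D \<le> sum_mset (image_mset deg mu) \<Longrightarrow>
   \<exists>m. kappa m = mu \<and> delta m = D \<and> (\<forall>p\<in>#m. snd p \<le> deg (fst p))"
proof (induction mu arbitrary: D)
  case empty then show ?case by (intro exI[of _ "{#}"]) (auto simp: kappa_def delta_def)
next
  case (add x mu)
  define i where "i = min D (deg x)"
  have "D - i \<le> sum_mset (image_mset deg mu)" using add(2) unfolding i_def by auto
  then obtain m where m: "kappa m = mu" "delta m = D - i" "\<forall>p\<in>#m. snd p \<le> deg (fst p)" using add(1) by blast
  show ?case using m
    by (intro exI[of _ "add_mset (x, i) m"]) (auto simp: kappa_def delta_def i_def)
qed

lemma delta_le: "(\<forall>p\<in>#m. snd p \<le> deg (fst p)) \<Longrightarrow> delta m \<le> sum_mset (image_mset deg (kappa m))"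
  unfolding kappa_def delta_def by (induction m) (auto intro: add_mono)

lemma delta_eq: "(\<forall>p\<in>#m. snd p = deg (fst p)) \<Longrightarrow> delta m = sum_mset (image_mset deg (kappa m))"
  unfolding kappa_def delta_def by (induction m) auto

lemma bounded_msets_finite: "finite A \<Longrightarrow> finite {l. set_mset l \<subseteq> A \<and> size l \<le> n}"
proof -
  assume "finite A"
  have "{l. set_mset l \<subseteq> A \<and> size l \<le> n} \<subseteq> mset ` {xs. set xs \<subseteq> A \<and> length xs \<le> n}"
  proof
    fix l assume "l \<in> {l. set_mset l \<subseteq> A \<and> size l \<le> n}"
    moreover obtain xs where "mset xs = l" using ex_mset by blast
    ultimately show "l \<in> mset ` {xs. set xs \<subseteq> A \<and> length xs \<le> n}" by force
  qed
  then show ?thesis using finite_lists_length_le[OF \<open>finite A\<close>] finite_subset by blast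
qed



theorem theorem5p3:
  fixes S :: "(int ^ 'n) set" and deg :: "int ^ 'n \<Rightarrow> nat"
    and lt :: "(int ^ 'n) multiset \<Rightarrow> (int ^ 'n) multiset \<Rightarrow> bool"
    and \<Lambda> :: "((int ^ 'n) multiset \<times> (int ^ 'n) multiset) set"
  assumes "affine_monoid S" and "reduced_monoid S" and "graded_monoid S deg"
    and "admissible_order (monoid_atoms S) lt"
    and "groebner_system (monoid_atoms S) pres_cong lt \<Lambda>"
  shows "groebner_system (monoid_atoms (tilde S deg)) pres_cong (tilde_order lt)
           (Gamma1 S deg \<Lambda> \<union> Gamma2 S deg lt \<union> Gamma3 S deg)"
proof -
  note A = assms(1-3)
  define T where "T = monoid_atoms (tilde S deg)"
  define AS where "AS = monoid_atoms S"
  have z: "0 \<in> S" using affine_zero A by blast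
  have Tc: "\<And>x i. (x, i) \<in> T \<longleftrightarrow> x \<in> AS \<and> i \<le> deg x" using tilde_atoms[OF A] T_def AS_def by blast
  have Tc': "\<And>p. p \<in> T \<longleftrightarrow> fst p \<in> AS \<and> snd p \<le> deg (fst p)" by (metis Tc prod.collapse)
  have ASfin: "finite AS" using atoms_finite A AS_def by blast
  have "T \<subseteq> Sigma AS (\<lambda>x. {..deg x})" using Tc' by auto
  then have Tfin: "finite T" using ASfin by (meson finite_SigmaI finite_atMost finite_subset)
  have sing: "\<And>a. a \<in> AS \<Longrightarrow> {#a#} \<in> fmon AS" by (simp add: fmon_def)
  have adm: "admissible_order AS lt" using assms(4) AS_def by simp
  have irr0: "\<forall>x\<in>fmon AS. \<not> lt x x" using adm unfolding admissible_order_def by (elim conjE) assumption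
  have trans0: "\<forall>x\<in>fmon AS. \<forall>y\<in>fmon AS. \<forall>z\<in>fmon AS. lt x y \<longrightarrow> lt y z \<longrightarrow> lt x z"
    using adm unfolding admissible_order_def by (elim conjE) assumption
  have tot0: "\<forall>x\<in>fmon AS. \<forall>y\<in>fmon AS. x = y \<or> lt x y \<or> lt y x"
    using adm unfolding admissible_order_def by (elim conjE) assumption
  have irr: "\<And>a. a \<in> AS \<Longrightarrow> \<not> lt {#a#} {#a#}" using irr0 sing by blast
  have asy: "\<And>a b. a \<in> AS \<Longrightarrow> b \<in> AS \<Longrightarrow> lt {#a#} {#b#} \<Longrightarrow> \<not> lt {#b#} {#a#}"
  proof
    fix a b assume ab: "a \<in> AS" "b \<in> AS" "lt {#a#} {#b#}" "lt {#b#} {#a#}"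
    then have "lt {#a#} {#a#}" using trans0 sing[OF ab(1)] sing[OF ab(2)] by blast
    then show False using irr ab(1) by blast
  qed
  have tot: "\<And>a b. a \<in> AS \<Longrightarrow> b \<in> AS \<Longrightarrow> a \<noteq> b \<Longrightarrow> lt {#a#} {#b#} \<or> lt {#b#} {#a#}"
  proof -
    fix a b assume ab: "a \<in> AS" "b \<in> AS" "a \<noteq> b"
    then have "{#a#} \<noteq> {#b#}" by simp
    then show "lt {#a#} {#b#} \<or> lt {#b#} {#a#}" using tot0 sing[OF ab(1)] sing[OF ab(2)] by blast
  qed
  have GL: "groebner_system AS pres_cong lt \<Lambda>" using assms(5) AS_def by simp
  have Lfin: "finite \<Lambda>" and Lsub: "\<Lambda> \<subseteq> fmon AS \<times> fmon AS"
    and Lpair: "\<forall>(x, y)\<in>\<Lambda>. pres_cong x y \<and> lt y x"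
    and Lmin: "\<forall>z\<in>fmon AS. (\<forall>(x, y)\<in>\<Lambda>. \<not> x \<subseteq># z) \<longrightarrow> (\<forall>w\<in>fmon AS. pres_cong w z \<longrightarrow> \<not> lt w z)"
    using GL unfolding groebner_system_def by auto
  have degsum: "\<And>m. m \<in> fmon AS \<Longrightarrow> deg (sum_mset m) = sum_mset (image_mset deg m)"
    using deg_sum[OF A(1) A(3)] atoms_sub AS_def unfolding fmon_def by blast
  define \<Gamma> where "\<Gamma> = Gamma1 S deg \<Lambda> \<union> Gamma2 S deg lt \<union> Gamma3 S deg"
  have G1: "\<And>l m. (l, m) \<in> Gamma1 S deg \<Lambda> \<longleftrightarrow> l \<in> fmon T \<and> m \<in> fmon T \<and> (kappa l, kappa m) \<in> \<Lambda> \<and> delta l = delta m"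
    unfolding Gamma1_def T_def by simp
  define B where "B n = {l. set_mset l \<subseteq> T \<and> size l \<le> n}" for n
  have Bfin: "\<And>n. finite (B n)" unfolding B_def using bounded_msets_finite[OF Tfin] by blast
  define N where "N = Max ((\<lambda>(x, y). size x + size y) ` \<Lambda>)"
  have "Gamma1 S deg \<Lambda> \<subseteq> B N \<times> B N"
  proof
    fix q assume q: "q \<in> Gamma1 S deg \<Lambda>"
    obtain l m where q': "q = (l, m)" by fastforce
    then have lm: "l \<in> fmon T" "m \<in> fmon T" "(kappa l, kappa m) \<in> \<Lambda>" using q G1 by auto
    have "size (kappa l) + size (kappa m) \<le> N" unfolding N_def using Lfin lm(3)
      by (metis (mono_tags, lifting) Max_ge case_prod_conv finite_imageI image_eqI)
    then show "q \<in> B N \<times> B N" using lm q' unfolding B_def fmon_def kappa_def by auto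
  qed
  moreover have "Gamma2 S deg lt \<subseteq> B 2 \<times> B 2"
    unfolding Gamma2_def B_def using Tc AS_def by auto
  moreover have "Gamma3 S deg \<subseteq> B 2 \<times> B 2"
    unfolding Gamma3_def B_def using Tc AS_def by auto
  ultimately have finG: "finite \<Gamma>" unfolding \<Gamma>_def using Bfin
    by (meson finite_SigmaI finite_UnI finite_subset)
  have subG: "\<Gamma> \<subseteq> fmon T \<times> fmon T"
    unfolding \<Gamma>_def using G1 by (auto simp: Gamma2_def Gamma3_def fmon_def Tc AS_def)
  have pairG: "\<forall>(x, y)\<in>\<Gamma>. pres_cong x y \<and> tilde_order lt y x"
  proof -
    have "pres_cong x y \<and> tilde_order lt y x" if xy: "(x, y) \<in> \<Gamma>" for x y
    proof -
      consider (g1) "(x, y) \<in> Gamma1 S deg \<Lambda>" | (g2) "(x, y) \<in> Gamma2 S deg lt" | (g3) "(x, y) \<in> Gamma3 S deg"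
        using xy \<Gamma>_def by blast
      then show ?thesis
      proof cases
        case g1
        then have xy1: "(kappa x, kappa y) \<in> \<Lambda>" "delta x = delta y" using G1 by auto
        then have "pres_cong (kappa x) (kappa y)" "lt (kappa y) (kappa x)" using Lpair by auto
        then show ?thesis using xy1(2) unfolding pres_cong_def tilde_order_def
          by (simp add: prod_eq_iff fst_sum_mset snd_sum_mset)
      next
        case g2
        then obtain a b i j where xd: "x = {#(a, i), (b, j)#}" "y = {#(a, i - 1), (b, j + 1)#}"
          "a \<in> AS" "b \<in> AS" "lt {#a#} {#b#}" "0 < i" "i \<le> deg a" "j < deg b"
          unfolding Gamma2_def AS_def by blast
        have ab: "a \<noteq> b" using irr xd by blast
        have pc: "pres_cong x y" using xd(6) unfolding xd(1,2) pres_cong_def by (simp add: prod_eq_iff)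
        have ky: "kappa y = kappa x" unfolding xd kappa_def by simp
        have "lex_greater lt y x" unfolding lex_greater_def
        proof (intro exI[of _ "(a, i - 1)"] conjI allI impI)
          show "count x (a, i - 1) < count y (a, i - 1)" using ab xd(6) unfolding xd(1,2) by simp
          fix q assume "pos_less lt q (a, i - 1)"
          then have qq: "lt {#fst q#} {#a#} \<or> (fst q = a \<and> snd q < i - 1)" unfolding pos_less_def by simp
          have "fst q \<noteq> a \<or> snd q < i - 1" using qq irr xd(3) by auto
          moreover have "fst q \<noteq> b" using qq asy xd(3,4,5) ab by auto
          ultimately have "q \<noteq> (a, i)" "q \<noteq> (a, i - 1)" "q \<noteq> (b, j)" "q \<noteq> (b, j + 1)" using ab by auto
          then show "count y q = count x q" unfolding xd(1,2) by simp
        qed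
        then show ?thesis using pc ky unfolding tilde_order_def by simp
      next
        case g3
        then obtain a i j where xd: "x = {#(a, i), (a, j)#}" "y = {#(a, i - 1), (a, j + 1)#}"
          "a \<in> AS" "0 < i" "i \<le> j" "j < deg a"
          unfolding Gamma3_def AS_def by blast
        have pc: "pres_cong x y" using xd(4) unfolding xd(1,2) pres_cong_def by (simp add: prod_eq_iff)
        have ky: "kappa y = kappa x" unfolding xd kappa_def by simp
        have "lex_greater lt y x" unfolding lex_greater_def
        proof (intro exI[of _ "(a, i - 1)"] conjI allI impI)
          have "i - 1 \<noteq> i" "i - 1 \<noteq> j" using xd(4,5) by auto
          then show "count x (a, i - 1) < count y (a, i - 1)" unfolding xd(1,2) by simp
          fix q assume "pos_less lt q (a, i - 1)"
          then have qq: "lt {#fst q#} {#a#} \<or> (fst q = a \<and> snd q < i - 1)" unfolding pos_less_def by simp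
          have "fst q \<noteq> a \<or> snd q < i - 1" using qq irr xd(3) by auto
          then have "q \<noteq> (a, i)" "q \<noteq> (a, i - 1)" "q \<noteq> (a, j)" "q \<noteq> (a, j + 1)" using xd(4,5) by auto
          then show "count y q = count x q" unfolding xd(1,2) by simp
        qed
        then show ?thesis using pc ky unfolding tilde_order_def by simp
      qed
    qed
    then show ?thesis by blast
  qed
  have minG: "\<forall>z\<in>fmon T. (\<forall>(x, y)\<in>\<Gamma>. \<not> x \<subseteq># z) \<longrightarrow> (\<forall>w\<in>fmon T. pres_cong w z \<longrightarrow> \<not> tilde_order lt w z)"
  proof (intro ballI impI notI)
    fix z w
    assume zT: "z \<in> fmon T" and nodiv: "\<forall>(x, y)\<in>\<Gamma>. \<not> x \<subseteq># z"
      and wT: "w \<in> fmon T" and cong: "pres_cong w z" and ord: "tilde_order lt w z"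
    have zb: "\<And>p. p \<in># z \<Longrightarrow> fst p \<in> AS \<and> snd p \<le> deg (fst p)" using zT Tc' unfolding fmon_def by blast
    have wb: "\<And>p. p \<in># w \<Longrightarrow> fst p \<in> AS \<and> snd p \<le> deg (fst p)" using wT Tc' unfolding fmon_def by blast
    have kz: "kappa z \<in> fmon AS" using zb unfolding fmon_def kappa_def by auto
    have kw: "kappa w \<in> fmon AS" using wb unfolding fmon_def kappa_def by auto
    have nodivK: "\<forall>(x, y)\<in>\<Lambda>. \<not> x \<subseteq># kappa z"
    proof (intro ballI notI, clarify)
      fix la mu assume lm: "(la, mu) \<in> \<Lambda>" and sub: "la \<subseteq># kappa z"
      obtain l where l: "l \<subseteq># z" "kappa l = la" using lift_sub[of la fst z] sub unfolding kappa_def by blast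
      have laA: "la \<in> fmon AS" and muA: "mu \<in> fmon AS" using lm Lsub by auto
      have pc: "pres_cong la mu" using lm Lpair by auto
      have lb: "\<forall>p\<in>#l. snd p \<le> deg (fst p)" using l(1) zb by (meson mset_subset_eqD)
      have "delta l \<le> sum_mset (image_mset deg la)" using delta_le[OF lb] l(2) by simp
      also have "\<dots> = deg (sum_mset la)" using degsum[OF laA] by simp
      also have "\<dots> = deg (sum_mset mu)" using pc unfolding pres_cong_def by simp
      also have "\<dots> = sum_mset (image_mset deg mu)" using degsum[OF muA] by simp
      finally obtain m where m: "kappa m = mu" "delta m = delta l" "\<forall>p\<in>#m. snd p \<le> deg (fst p)"
        using lift_delta by blast
      have "m \<in> fmon T"
      proof -
        have "fst p \<in> AS" if "p \<in># m" for p
        proof -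
          have "fst p \<in># kappa m" using that unfolding kappa_def by simp
          then show ?thesis using muA m(1) unfolding fmon_def by auto
        qed
        then show ?thesis using m(3) Tc' unfolding fmon_def by blast
      qed
      moreover have "l \<in> fmon T" using l(1) zT unfolding fmon_def by (auto dest: mset_subset_eqD)
      ultimately have "(l, m) \<in> \<Gamma>" unfolding \<Gamma>_def using G1 lm l(2) m by auto
      then show False using nodiv l(1) by blast
    qed
    have "pres_cong (kappa w) (kappa z)" using cong unfolding pres_cong_def
      by (metis fst_sum_mset)
    then have "\<not> lt (kappa w) (kappa z)" using Lmin kz kw nodivK by blast
    then have keq: "kappa w = kappa z" and lg: "lex_greater lt w z" using ord unfolding tilde_order_def by auto
    have deq: "delta w = delta z" using cong unfolding pres_cong_def by (metis snd_sum_mset)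
    obtain p where cp: "count z p < count w p" and eqb: "\<And>q. pos_less lt q p \<Longrightarrow> count w q = count z q"
      using lg unfolding lex_greater_def by blast
    obtain a k where p: "p = (a, k)" by fastforce
    have "0 < count w p" using cp by linarith
    then have "p \<in># w" by simp
    then have aA: "a \<in> AS" and kd: "k \<le> deg a" using wb p by auto
    define Lp where "Lp = (\<lambda>q::(int ^ 'n) \<times> nat. lt {#fst q#} {#a#})"
    define Hp where "Hp = (\<lambda>q::(int ^ 'n) \<times> nat. lt {#a#} {#fst q#})"
    define Ap where "Ap = (\<lambda>q::(int ^ 'n) \<times> nat. fst q = a)"
    have splitd: "delta m = delta (filter_mset Lp m) + delta (filter_mset Ap m) + delta (filter_mset Hp m)"
      if mb: "\<And>p. p \<in># m \<Longrightarrow> fst p \<in> AS \<and> snd p \<le> deg (fst p)" for m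
    proof -
      have eq: "m = filter_mset Lp m + filter_mset Ap m + filter_mset Hp m"
      proof (rule multiset_eqI)
        fix q
        show "count m q = count (filter_mset Lp m + filter_mset Ap m + filter_mset Hp m) q"
        proof (cases "q \<in># m")
          case True
          then have qA: "fst q \<in> AS" using mb by blast
          show ?thesis
          proof (cases "fst q = a")
            case True
            then have "Ap q" "\<not> Lp q" "\<not> Hp q" unfolding Ap_def Lp_def Hp_def using irr aA by auto
            then show ?thesis by simp
          next
            case False
            then have "Lp q \<or> Hp q" unfolding Lp_def Hp_def using tot aA qA by blast
            moreover have "\<not> (Lp q \<and> Hp q)" unfolding Lp_def Hp_def using asy aA qA by blast
            moreover have "\<not> Ap q" unfolding Ap_def using False by simp
            ultimately show ?thesis by auto
          qed
        next
          case False then show ?thesis by (simp add: not_in_iff)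
        qed
      qed
      have "delta m = delta (filter_mset Lp m + filter_mset Ap m + filter_mset Hp m)"
        using eq by (rule arg_cong[where f=delta])
      then show ?thesis by simp
    qed
    have Leq: "filter_mset Lp w = filter_mset Lp z"
    proof (rule multiset_eqI)
      fix q show "count (filter_mset Lp w) q = count (filter_mset Lp z) q"
      proof (cases "Lp q")
        case True then have "pos_less lt q p" unfolding Lp_def pos_less_def p by simp
        then show ?thesis using eqb True by simp
      qed simp
    qed
    define Z where "Z = image_mset snd (filter_mset Ap z)"
    define W where "W = image_mset snd (filter_mset Ap w)"
    have fZ: "filter_mset Ap z = image_mset (Pair a) Z"
    proof -
      have "image_mset (Pair a) Z = image_mset (\<lambda>q. (a, snd q)) (filter_mset Ap z)"
        unfolding Z_def by (simp add: image_mset.compositionality o_def)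
      also have "\<dots> = image_mset id (filter_mset Ap z)" by (rule image_mset_cong) (auto simp: Ap_def prod_eq_iff)
      finally show ?thesis by simp
    qed
    have fW: "filter_mset Ap w = image_mset (Pair a) W"
    proof -
      have "image_mset (Pair a) W = image_mset (\<lambda>q. (a, snd q)) (filter_mset Ap w)"
        unfolding W_def by (simp add: image_mset.compositionality o_def)
      also have "\<dots> = image_mset id (filter_mset Ap w)" by (rule image_mset_cong) (auto simp: Ap_def prod_eq_iff)
      finally show ?thesis by simp
    qed
    have cZ: "count Z i = count z (a, i)" for i
    proof -
      have "count Z i = count (filter_mset Ap z) (a, i)" using count_pair_image[of a Z i] fZ by simp
      then show ?thesis by (simp add: Ap_def)
    qed
    have cW: "count W i = count w (a, i)" for i
    proof -
      have "count W i = count (filter_mset Ap w) (a, i)" using count_pair_image[of a W i] fW by simp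
      then show ?thesis by (simp add: Ap_def)
    qed
    have bW: "\<forall>x\<in>#W. x \<le> deg a" unfolding W_def using wb by (auto simp: Ap_def)
    have bZ: "\<forall>x\<in>#Z. x \<le> deg a" unfolding Z_def using zb by (auto simp: Ap_def)
    have swz: "image_mset fst (filter_mset Ap z) = filter_mset (\<lambda>c. c = a) (kappa z)"
      unfolding Ap_def kappa_def by (rule image_mset_filter_mset_swap)
    have sww: "image_mset fst (filter_mset Ap w) = filter_mset (\<lambda>c. c = a) (kappa w)"
      unfolding Ap_def kappa_def by (rule image_mset_filter_mset_swap)
    have "size Z = size (filter_mset (\<lambda>c. c = a) (kappa z))"
      unfolding Z_def by (metis size_image_mset swz)
    moreover have "size W = size (filter_mset (\<lambda>c. c = a) (kappa w))"
      unfolding W_def by (metis size_image_mset sww)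
    ultimately have sz: "size Z = size W" using keq by simp
    have lo: "\<forall>i<k. count Z i = count W i"
    proof (intro allI impI)
      fix i assume "i < k"
      then have "pos_less lt (a, i) p" unfolding pos_less_def p by simp
      then show "count Z i = count W i" using eqb cZ cW by simp
    qed
    have ck: "count Z k < count W k" using cp cZ cW p by simp
    have g3: "size (filter_mset (\<lambda>x. 0 < x \<and> x < deg a) Z) \<le> 1"
    proof (rule ccontr)
      assume "\<not> ?thesis"
      then have "size (filter_mset (\<lambda>x. 0 < x \<and> x < deg a) Z) \<ge> 2" by simp
      then obtain i j where ij: "{#i, j#} \<subseteq># filter_mset (\<lambda>x. 0 < x \<and> x < deg a) Z"
        using size_ge2_pair by blast
      have "i \<in># filter_mset (\<lambda>x. 0 < x \<and> x < deg a) Z" "j \<in># filter_mset (\<lambda>x. 0 < x \<and> x < deg a) Z"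
        using ij by (auto dest: mset_subset_eqD)
      then have ib: "0 < i" "i < deg a" "0 < j" "j < deg a" by auto
      have "{#i, j#} \<subseteq># Z" using ij multiset_filter_subset subset_mset.order_trans by blast
      then have "image_mset (Pair a) {#i, j#} \<subseteq># image_mset (Pair a) Z" by (rule image_mset_subseteq_mono)
      moreover have "image_mset (Pair a) Z \<subseteq># z" using fZ multiset_filter_subset by metis
      ultimately have s2: "{#(a, i), (a, j)#} \<subseteq># z" using subset_mset.order_trans by fastforce
      have "{#(a, min i j), (a, max i j)#} = {#(a, i), (a, j)#}"
        by (cases "i \<le> j") (auto simp: min_def max_def add_mset_commute)
      then have s3: "{#(a, min i j), (a, max i j)#} \<subseteq># z" using s2 by simp
      have "0 < min i j" "min i j \<le> max i j" "max i j < deg a" "a \<in> monoid_atoms S"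
        using ib aA AS_def by auto
      then have "({#(a, min i j), (a, max i j)#}, {#(a, min i j - 1), (a, max i j + 1)#}) \<in> Gamma3 S deg"
        unfolding Gamma3_def by blast
      then show False using nodiv s3 unfolding \<Gamma>_def by blast
    qed
    obtain j where jZ: "j \<in># Z" and kj: "k < j" and sWZ: "sum_mset W < sum_mset Z"
      using arith_core[OF bW bZ sz lo ck g3] by blast
    have "0 < count Z j" using jZ by simp
    then have "0 < count z (a, j)" using cZ[of j] by simp
    then have ajz: "(a, j) \<in># z" by simp
    have jd: "j \<le> deg a" using zb[OF ajz] by simp
    have Hz: "\<forall>q\<in>#filter_mset Hp z. snd q = deg (fst q)"
    proof
      fix q assume "q \<in># filter_mset Hp z"
      then have qz: "q \<in># z" and hq: "Hp q" by auto
      obtain b j' where q: "q = (b, j')" by fastforce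
      have bA: "b \<in> AS" and jb: "j' \<le> deg b" using zb[OF qz] q by auto
      have ltab: "lt {#a#} {#b#}" using hq q unfolding Hp_def by simp
      have ab: "a \<noteq> b" using ltab irr aA by blast
      show "snd q = deg (fst q)"
      proof (rule ccontr)
        assume "snd q \<noteq> deg (fst q)"
        then have jb': "j' < deg b" using jb q by simp
        have "{#(a, j), (b, j')#} \<subseteq># z" using ajz qz q ab by (simp add: insert_subset_eq_iff in_diff_count)
        moreover have "({#(a, j), (b, j')#}, {#(a, j - 1), (b, j' + 1)#}) \<in> Gamma2 S deg lt"
        proof -
          have "a \<in> monoid_atoms S" "b \<in> monoid_atoms S" "0 < j" using aA bA AS_def kj by auto
          then show ?thesis unfolding Gamma2_def using ltab jd jb' by blast
        qed
        ultimately show False using nodiv unfolding \<Gamma>_def by blast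
      qed
    qed
    have kH: "kappa (filter_mset Hp m) = filter_mset (\<lambda>c. lt {#a#} {#c#}) (kappa m)" for m
      unfolding Hp_def kappa_def by (rule image_mset_filter_mset_swap)
    have "delta (filter_mset Hp w) \<le> sum_mset (image_mset deg (kappa (filter_mset Hp w)))"
      by (rule delta_le) (use wb in auto)
    also have "\<dots> = sum_mset (image_mset deg (kappa (filter_mset Hp z)))" using kH keq by simp
    also have "\<dots> = delta (filter_mset Hp z)" using delta_eq[OF Hz] by simp
    finally have Hle: "delta (filter_mset Hp w) \<le> delta (filter_mset Hp z)" .
    have dAz: "delta (filter_mset Ap z) = sum_mset Z" unfolding Z_def delta_def ..
    have dAw: "delta (filter_mset Ap w) = sum_mset W" unfolding W_def delta_def ..
    have "delta w < delta z"
      using splitd[OF wb] splitd[OF zb] Leq Hle dAz dAw sWZ by simp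
    then show False using deq by simp
  qed
  show ?thesis unfolding groebner_system_def \<Gamma>_def[symmetric] T_def[symmetric]
    using finG subG pairG minG by blast
qed

end
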